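(* For the 0-1-loss $\ell_{0\text{-}1}(\mathrm{h},(x,y))=1-\mathrm{h}(y|x)$ (score $L(\mathrm{q},y)=1-\mathrm{q}(y)$) and $\mathbf{a},\mathbf{b}\in\mathbb{R}^m$, the problem $\mathscr{P}_{\ell_{0\text{-}1}}^{\mathbf{a},\mathbf{b}}$ is equivalent to $$\mathscr{P}_{0\text{-}1}^{\mathbf{a},\mathbf{b}}:\ \min_{\boldsymbol{\mu},\boldsymbol{\eta},\nu}\ \tfrac{1}{2}(\mathbf{b}-\mathbf{a})^{\mathrm{T}}\boldsymbol{\eta}-\tfrac{1}{2}(\mathbf{b}+\mathbf{a})^{\mathrm{T}}\boldsymbol{\mu}-\nu\ \text{ s.t. }\sum_{y\in\mathcal{Y}}(\Phi(x,y)^{\mathrm{T}}\boldsymbol{\mu}+\nu+1)_+\leq 1\ \forall x\in\mathcal{X},\ \boldsymbol{\eta}+\boldsymbol{\mu}\succeq\mathbf{0},\ \boldsymbol{\eta}-\boldsymbol{\mu}\succeq\mathbf{0}.$$ In addition, for a solution $\boldsymbol{\mu}^*,\boldsymbol{\eta}^*,\nu^*$ of $\mathscr{P}_{0\text{-}1}^{\mathbf{a},\mathbf{b}}$, the condition $\ell_{0\text{-}1}(\mathrm{h},(x,y))+\Phi(x,y)^{\mathrm{T}}\boldsymbol{\mu}^*+\nu^*\leq 0$ for all $x,y$ (which makes $\mathrm{h}$ a 0-1-MRC for $\mathcal{U}^{\mathbf{a},\mathbf{b}}$) becomes $$\mathrm{h}(y|x)\geq \Phi(x,y)^{\mathrm{T}}\boldsymbol{\mu}^*+\nu^*+1\quad\forall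 x\in\mathcal{X},y\in\mathcal{Y}.$$
   Context: Let $\mathcal{X},\mathcal{Y}$ be finite nonempty sets, $\mathcal{Y}=\{1,\dots,|\mathcal{Y}|\}$; $\Delta(\mathcal{Y})$ is the set of probability distributions on $\mathcal{Y}$. A classification rule $\mathrm{h}$ assigns to each $x$ a distribution $\mathrm{h}(\cdot|x)\in\Delta(\mathcal{Y})$. For a score function $L$ with loss $\ell(\mathrm{h},(x,y))=L(\mathrm{h}(\cdot|x),y)$: $\Phi:\mathcal{X}\times\mathcal{Y}\to\mathbb{R}^m$ is a feature mapping, $\boldsymbol{\Phi}(x,\cdot)$ is the $|\mathcal{Y}|\times m$ matrix with rows $\Phi(x,y)^{\mathrm{T}}$, $\mathbf{1}$ the all-ones vector, $\preceq,\succeq$ componentwise, $\mathcal{L}=\{\mathbf{c}\in\mathbb{R}^{|\mathcal{Y}|}:\exists\,\mathrm{q}\in\Delta(\mathcal{Y}),\ \mathbf{c}+(L(\mathrm{q},y))_y\preceq\mathbf{0}\}$, and $\mathscr{P}_{\ell}^{\mathbf{a},\mathbf{b}}$ is $\min_{\boldsymbol{\mu},\boldsymbol{\eta},\nu}\tfrac12(\mathbf{b}-\mathbf{a})^{\mathrm{T}}\boldsymbol{\eta}-\tfrac12(\mathbf{b}+\mathbf{a})^{\mathrm{T}}\boldsymbol{\mu}-\nu$ s.t. $\boldsymbol{\Phi}(x,\cdot)\boldsymbol{\mu}+\nu\mathbf{1}\in\mathcal{L}$ $\forall x$, $\boldsymbol{\eta}\pm\boldsymbol{\mu}\succeq\mathbf{0}$.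 $\mathcal{U}^{\mathbf{a},\mathbf{b}}=\{\mathrm{p}\in\Delta(\mathcal{X}\times\mathcal{Y}):\mathbf{a}\preceq\mathbb{E}_{\mathrm{p}}\{\Phi\}\preceq\mathbf{b}\}$; an $\ell$-MRC for $\mathcal{U}$ minimizes $\max_{\mathrm{p}\in\mathcal{U}}\sum_{x,y}\mathrm{p}(x,y)\ell(\mathrm{h},(x,y))$ over all classification rules. $(t)_+=\max(t,0)$. *)

theory Defs
  imports "HOL-Analysis.Analysis"
begin

definition prob_dists :: "('y::finite \<Rightarrow> real) set" where
  "prob_dists = {q. (\<forall>y. 0 \<le> q y) \<and> sum q UNIV = 1}"

definition class_rule :: "('x \<Rightarrow> 'y::finite \<Rightarrow> real) \<Rightarrow> bool" where
  "class_rule h \<longleftrightarrow> (\<forall>x. h x \<in> prob_dists)"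

definition Lset :: "(('y::finite \<Rightarrow> real) \<Rightarrow> 'y \<Rightarrow> real) \<Rightarrow> ('y \<Rightarrow> real) set" where
  "Lset L = {c. \<exists>q\<in>prob_dists. \<forall>y. c y + L q y \<le> 0}"

definition score01 :: "('y \<Rightarrow> real) \<Rightarrow> 'y \<Rightarrow> real" where
  "score01 q y = 1 - q y"

definition loss :: "(('y \<Rightarrow> real) \<Rightarrow> 'y \<Rightarrow> real) \<Rightarrow> ('x \<Rightarrow> 'y \<Rightarrow> real) \<Rightarrow> 'x \<times> 'y \<Rightarrow> real" where
  "loss L h xy = L (h (fst xy)) (snd xy)"

definition mrc_obj :: "real^'m \<Rightarrow> real^'m \<Rightarrow> (real^'m) \<times> (real^'m) \<times> real \<Rightarrow> real" where
  "mrc_obj a b z = (case z of (\<mu>, \<eta>, \<nu>) \<Rightarrow>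
     (1/2) * ((b - a) \<bullet> \<eta>) - (1/2) * ((b + a) \<bullet> \<mu>) - \<nu>)"

definition P_ell_feasible ::
  "(('y::finite \<Rightarrow> real) \<Rightarrow> 'y \<Rightarrow> real) \<Rightarrow> ('x::finite \<Rightarrow> 'y \<Rightarrow> real^'m)
     \<Rightarrow> (real^'m) \<times> (real^'m) \<times> real \<Rightarrow> bool" where
  "P_ell_feasible L \<Phi> z = (case z of (\<mu>, \<eta>, \<nu>) \<Rightarrow>
     (\<forall>x. (\<lambda>y. \<Phi> x y \<bullet> \<mu> + \<nu>) \<in> Lset L) \<and>
     (\<forall>i. 0 \<le> \<eta> $ i + \<mu> $ i \<and> 0 \<le> \<eta> $ i - \<mu> $ i))"

definition P01_feasible ::
  "('x::finite \<Rightarrow> 'y::finite \<Rightarrow> real^'m) \<Rightarrow> (real^'m) \<times> (real^'m) \<times> real \<Rightarrow> bool" where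
  "P01_feasible \<Phi> z = (case z of (\<mu>, \<eta>, \<nu>) \<Rightarrow>
     (\<forall>x. (\<Sum>y\<in>UNIV. max (\<Phi> x y \<bullet> \<mu> + \<nu> + 1) 0) \<le> 1) \<and>
     (\<forall>i. 0 \<le> \<eta> $ i + \<mu> $ i \<and> 0 \<le> \<eta> $ i - \<mu> $ i))"

definition is_solution :: "('z \<Rightarrow> bool) \<Rightarrow> ('z \<Rightarrow> real) \<Rightarrow> 'z \<Rightarrow> bool" where
  "is_solution F f z \<longleftrightarrow> F z \<and> (\<forall>z'. F z' \<longrightarrow> f z \<le> f z')"

end

theory Submission
  imports Defs
begin

lemma Lset01_iff:
  fixes c :: "'y::finite \<Rightarrow> real"
  shows "c \<in> Lset score01 \<longleftrightarrow> (\<Sum>y\<in>UNIV. max (c y + 1) 0) \<le> 1"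
proof
  assume "c \<in> Lset score01"
  then obtain q where q: "q \<in> prob_dists" "\<forall>y. c y + (1 - q y) \<le> 0"
    by (auto simp: Lset_def score01_def)
  have "(\<Sum>y\<in>UNIV. max (c y + 1) 0) \<le> (\<Sum>y\<in>UNIV. q y)"
    proof (intro sum_mono)
    fix y
    have "0 \<le> q y" "c y + (1 - q y) \<le> 0" using q by (auto simp: prob_dists_def)
    then show "max (c y + 1) 0 \<le> q y" by linarith
  qed
  also have "\<dots> = 1" using q by (simp add: prob_dists_def)
  finally show "(\<Sum>y\<in>UNIV. max (c y + 1) 0) \<le> 1" .
next
  assume s: "(\<Sum>y\<in>UNIV. max (c y + 1) 0) \<le> 1"
  define S where "S = (\<Sum>y\<in>UNIV. max (c y + 1) 0)"
  define n where "n = real (card (UNIV :: 'y set))"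
  have n: "n > 0" unfolding n_def by simp
  define q where "q y = max (c y + 1) 0 + (1 - S) / n" for y
  have nn: "(1 - S) / n \<ge> 0" using s n by (simp add: S_def)
  have "sum q UNIV = S + n * ((1 - S) / n)"
    by (simp add: q_def sum.distrib S_def n_def)
  also have "\<dots> = 1" using n by simp
  finally have "sum q UNIV = 1" .
  moreover have "\<forall>y. 0 \<le> q y" using nn by (simp add: q_def add_nonneg_nonneg)
  moreover have "\<forall>y. c y + score01 q y \<le> 0"
  proof
    fix y
    have "c y + 1 \<le> max (c y + 1) 0" by simp
    then show "c y + score01 q y \<le> 0" using nn unfolding q_def score01_def by linarith
  qed
  ultimately show "c \<in> Lset score01"
    unfolding Lset_def prob_dists_def by blast
qed

lemma feas_eq: "P_ell_feasible score01 \<Phi> z \<longleftrightarrow> P01_feasible \<Phi> z"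
  by (cases z) (simp add: P_ell_feasible_def P01_feasible_def Lset01_iff add.assoc)

theorem corollary4:
  fixes \<Phi> :: "'x::finite \<Rightarrow> 'y::finite \<Rightarrow> real^'m"
    and a b :: "real^'m"
  shows "(\<forall>z. P_ell_feasible score01 \<Phi> z \<longleftrightarrow> P01_feasible \<Phi> z)
    \<and> (\<forall>z. is_solution (P_ell_feasible score01 \<Phi>) (mrc_obj a b) z
            \<longleftrightarrow> is_solution (P01_feasible \<Phi>) (mrc_obj a b) z)
    \<and> (\<forall>\<mu>s \<eta>s \<nu>s h. is_solution (P01_feasible \<Phi>) (mrc_obj a b) (\<mu>s, \<eta>s, \<nu>s)
          \<longrightarrow> class_rule h
          \<longrightarrow> ((\<forall>x y. loss score01 h (x, y) + \<Phi> x y \<bullet> \<mu>s + \<nu>s \<le> 0)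
               \<longleftrightarrow> (\<forall>x y. h x y \<ge> \<Phi> x y \<bullet> \<mu>s + \<nu>s + 1)))"
proof -
  have e: "P_ell_feasible score01 \<Phi> = P01_feasible \<Phi>"
    using feas_eq by blast
  have l: "loss score01 h (x, y) + \<Phi> x y \<bullet> \<mu> + \<nu> \<le> 0 \<longleftrightarrow> h x y \<ge> \<Phi> x y \<bullet> \<mu> + \<nu> + 1"
    for h :: "'x \<Rightarrow> 'y \<Rightarrow> real" and x y \<mu> \<nu>
    by (auto simp: loss_def score01_def)
  show ?thesis using e l by simp
qed

end
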